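(* Let $Z$ be a compact Hausdorff space containing (as a subspace) a homeomorphic copy of the one-point compactification of an uncountable discrete space, and let $n\in\mathbb{Z}_{>0}$. Then for every $d$ with $2\le d\le n$, the subspace $$Z_{(d)}:=\{\mathbf z\subseteq Z:\ |\mathbf z|=d\}\subseteq Z_{[n]}$$ (the stratum of $Z_{[n]}$ consisting of the points whose fiber under $\pi:Z_{[n]}^{\subseteq}\to Z_{[n]}$ has exactly $d$ elements) is not a normal topological space.
   Context: $Z_{[n]}:=\{\mathbf z\subseteq Z:\ 1\le|\mathbf z|\le n\}$ carries the quotient topology from $Z^n$ via $(z_i)_i\mapsto\{z_i\}_i$ (equivalently the Vietoris topology); $Z_{[n]}^{\subseteq}:=\{(z,x)\in Z\times Z_{[n]}: z\in x\}$ and $\pi$ is the second projection. A space is normal if any two disjoint closed subsets have disjoint open neighborhoods. *)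

theory Defs
  imports "HOL-Analysis.Analysis"
begin

text \<open>One-point (Alexandroff) compactification of a topological space X, on the carrier
  Some ` topspace X plus the point at infinity None. Open sets: images of open sets of X,
  and complements (containing None) of closed compact subsets of X.\<close>
definition alexandroff :: "'a topology \<Rightarrow> 'a option topology" where
  "alexandroff X = topology (\<lambda>V.
      (\<exists>U. openin X U \<and> V = Some ` U) \<or>
      (\<exists>C. compactin X C \<and> closedin X C \<and> V = insert None (Some ` (topspace X - C))))"

definition finset_of :: "nat \<Rightarrow> (nat \<Rightarrow> 'a) \<Rightarrow> 'a set" where
  "finset_of n f = f ` {..<n}"

text \<open>Z_[n] with the quotient topology from Z^n (product topology) under finset_of n.\<close>
definition finset_space :: "'a topology \<Rightarrow> nat \<Rightarrow> 'a set topology" where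
  "finset_space X n = topology (\<lambda>U.
      U \<subseteq> finset_of n ` topspace (product_topology (\<lambda>i. X) {..<n}) \<and>
      openin (product_topology (\<lambda>i. X) {..<n})
        {f \<in> topspace (product_topology (\<lambda>i. X) {..<n}). finset_of n f \<in> U})"

definition stratum :: "'a topology \<Rightarrow> nat \<Rightarrow> nat \<Rightarrow> 'a set topology" where
  "stratum X n d = subtopology (finset_space X n) {z. z \<subseteq> topspace X \<and> finite z \<and> card z = d}"

end

theory Submission
  imports Defs
begin

lemma alex_open_iff:
  "openin (alexandroff (discrete_topology D)) V \<longleftrightarrow>
     V \<subseteq> insert None (Some ` D) \<and> (None \<in> V \<longrightarrow> finite {a\<in>D. Some a \<notin> V})"
proof -
  define P where "P = (\<lambda>V::'a option set. V \<subseteq> insert None (Some ` D) \<and> (None \<in> V \<longrightarrow> finite {a\<in>D. Some a \<notin> V}))"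
  define R where "R = (\<lambda>V. (\<exists>U. openin (discrete_topology D) U \<and> V = Some ` U) \<or>
      (\<exists>C. compactin (discrete_topology D) C \<and> closedin (discrete_topology D) C \<and> V = insert None (Some ` (topspace (discrete_topology D) - C))))"
  have RP: "R V \<longleftrightarrow> P V" for V
  proof
    assume "R V"
    then consider (a) U where "U \<subseteq> D" "V = Some ` U"
      | (b) C where "C \<subseteq> D" "finite C" "V = insert None (Some ` (D - C))"
      unfolding R_def compactin_discrete_topology openin_discrete_topology topspace_discrete_topology
      by blast
    then show "P V"
    proof cases
      case a
      have "V \<subseteq> insert None (Some ` D)" using a by blast
      moreover have "None \<notin> V" using a by blast
      ultimately show ?thesis unfolding P_def by blast
    next
      case b
      have "V \<subseteq> insert None (Some ` D)" using b by blast
      moreover have "{a\<in>D. Some a \<notin> V} \<subseteq> C" using b by blast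
      then have "finite {a\<in>D. Some a \<notin> V}" using b(2) by (rule finite_subset)
      ultimately show ?thesis unfolding P_def by blast
    qed
  next
    assume PV: "P V"
    then have sub: "V \<subseteq> insert None (Some ` D)" unfolding P_def by blast
    show "R V"
    proof (cases "None \<in> V")
      case False
      have "V = Some ` {a. Some a \<in> V}"
      proof
        show "V \<subseteq> Some ` {a. Some a \<in> V}"
        proof
          fix v assume "v \<in> V" then show "v \<in> Some ` {a. Some a \<in> V}" using False by (cases v) auto
        qed
      qed blast
      moreover have "{a. Some a \<in> V} \<subseteq> D" using sub by blast
      ultimately show ?thesis unfolding R_def openin_discrete_topology by blast
    next
      case True
      define C where "C = {a\<in>D. Some a \<notin> V}"
      have fC: "finite C" using True PV unfolding P_def C_def by blast
      have CD: "C \<subseteq> D" unfolding C_def by blast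
      have "V = insert None (Some ` (D - C))"
      proof
        show "V \<subseteq> insert None (Some ` (D - C))"
        proof
          fix v assume v: "v \<in> V"
          show "v \<in> insert None (Some ` (D - C))"
          proof (cases v)
            case None then show ?thesis by simp
          next
            case (Some a)
            then have "a \<in> D" using v sub by blast
            then show ?thesis using Some v unfolding C_def by blast
          qed
        qed
        show "insert None (Some ` (D - C)) \<subseteq> V" using True unfolding C_def by blast
      qed
      then show ?thesis unfolding R_def compactin_discrete_topology closedin_discrete_topology topspace_discrete_topology
        using fC CD by blast
    qed
  qed
  then have eq: "R = P" by (rule ext)
  have "istopology P"
    unfolding istopology_def
  proof (rule conjI; intro allI impI)
    fix S T assume S: "P S" and T: "P T"
    have "S \<inter> T \<subseteq> insert None (Some ` D)" using S unfolding P_def by blast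
    moreover have "None \<in> S \<inter> T \<longrightarrow> finite {a\<in>D. Some a \<notin> S \<inter> T}"
    proof
      assume "None \<in> S \<inter> T"
      then have "finite {a\<in>D. Some a \<notin> S}" "finite {a\<in>D. Some a \<notin> T}" using S T unfolding P_def by blast+
      then have "finite ({a\<in>D. Some a \<notin> S} \<union> {a\<in>D. Some a \<notin> T})" by blast
      moreover have "{a\<in>D. Some a \<notin> S \<inter> T} \<subseteq> {a\<in>D. Some a \<notin> S} \<union> {a\<in>D. Some a \<notin> T}" by blast
      ultimately show "finite {a\<in>D. Some a \<notin> S \<inter> T}" using finite_subset by blast
    qed
    ultimately show "P (S \<inter> T)" unfolding P_def by blast
  next
    fix K assume K: "\<forall>S\<in>K. P S"
    have "\<Union>K \<subseteq> insert None (Some ` D)" using K unfolding P_def by blast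
    moreover have "None \<in> \<Union>K \<longrightarrow> finite {a\<in>D. Some a \<notin> \<Union>K}"
    proof
      assume "None \<in> \<Union>K"
      then obtain S where "S \<in> K" "None \<in> S" by blast
      then have "finite {a\<in>D. Some a \<notin> S}" using K unfolding P_def by blast
      moreover have "{a\<in>D. Some a \<notin> \<Union>K} \<subseteq> {a\<in>D. Some a \<notin> S}" using \<open>S \<in> K\<close> by blast
      ultimately show "finite {a\<in>D. Some a \<notin> \<Union>K}" using finite_subset by blast
    qed
    ultimately show "P (\<Union>K)" unfolding P_def by blast
  qed
  then have "openin (topology P) = P" by (rule topology_inverse')
  then have "openin (alexandroff (discrete_topology D)) = P" unfolding alexandroff_def eq[unfolded R_def] .
  then show ?thesis unfolding P_def by simp
qed

lemma alex_topspace: "topspace (alexandroff (discrete_topology D)) = insert None (Some ` D)"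
proof -
  have "openin (alexandroff (discrete_topology D)) (insert None (Some ` D))"
  proof -
    have "finite {a \<in> D. Some a \<notin> insert None (Some ` D)}"
      by (rule finite_subset[of _ "{}"]) auto
    then show ?thesis unfolding alex_open_iff by blast
  qed
  then have "insert None (Some ` D) \<subseteq> topspace (alexandroff (discrete_topology D))"
    by (rule openin_subset)
  moreover have "topspace (alexandroff (discrete_topology D)) \<subseteq> insert None (Some ` D)"
    using alex_open_iff by (metis openin_topspace)
  ultimately show ?thesis by blast
qed

lemma alex_compact: "compact_space (alexandroff (discrete_topology D))"
  unfolding compact_space_def compactin_def
proof (intro conjI allI impI)
  fix U assume U: "(\<forall>B\<in>U. openin (alexandroff (discrete_topology D)) B) \<and>
      topspace (alexandroff (discrete_topology D)) \<subseteq> \<Union>U"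
  then obtain B0 where B0: "B0 \<in> U" "None \<in> B0" by (auto simp: alex_topspace)
  then have fin: "finite {a\<in>D. Some a \<notin> B0}" using U by (auto simp: alex_open_iff)
  have "\<forall>c\<in>{a\<in>D. Some a \<notin> B0}. \<exists>B\<in>U. Some c \<in> B" using U by (auto simp: alex_topspace)
  then obtain h where h: "\<And>c. c\<in>{a\<in>D. Some a \<notin> B0} \<Longrightarrow> h c \<in> U \<and> Some c \<in> h c" by metis
  show "\<exists>F. finite F \<and> F \<subseteq> U \<and> topspace (alexandroff (discrete_topology D)) \<subseteq> \<Union>F"
    apply (rule exI[of _ "insert B0 (h ` {a\<in>D. Some a \<notin> B0})"])
    using fin B0 h by (auto simp: alex_topspace)
qed simp


lemma fs_open_iff:
  "openin (finset_space X n) U \<longleftrightarrow>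
     U \<subseteq> finset_of n ` topspace (product_topology (\<lambda>i. X) {..<n}) \<and>
     openin (product_topology (\<lambda>i. X) {..<n})
        {f \<in> topspace (product_topology (\<lambda>i. X) {..<n}). finset_of n f \<in> U}"
proof -
  let ?PX = "product_topology (\<lambda>i. X) {..<n}"
  have "istopology (\<lambda>U. U \<subseteq> finset_of n ` topspace ?PX \<and>
      openin ?PX {f \<in> topspace ?PX. finset_of n f \<in> U})"
    unfolding istopology_def
  proof (rule conjI; intro allI impI)
    fix S T assume a: "S \<subseteq> finset_of n ` topspace ?PX \<and> openin ?PX {f \<in> topspace ?PX. finset_of n f \<in> S}"
      "T \<subseteq> finset_of n ` topspace ?PX \<and> openin ?PX {f \<in> topspace ?PX. finset_of n f \<in> T}"
    have "{f \<in> topspace ?PX. finset_of n f \<in> S \<inter> T} =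
      {f \<in> topspace ?PX. finset_of n f \<in> S} \<inter> {f \<in> topspace ?PX. finset_of n f \<in> T}" by auto
    then show "S \<inter> T \<subseteq> finset_of n ` topspace ?PX \<and> openin ?PX {f \<in> topspace ?PX. finset_of n f \<in> S \<inter> T}"
      using a by auto
  next
    fix K assume K: "\<forall>S\<in>K. S \<subseteq> finset_of n ` topspace ?PX \<and> openin ?PX {f \<in> topspace ?PX. finset_of n f \<in> S}"
    have "{f \<in> topspace ?PX. finset_of n f \<in> \<Union>K} = \<Union>((\<lambda>S. {f \<in> topspace ?PX. finset_of n f \<in> S}) ` K)" by auto
    moreover have "openin ?PX (\<Union>((\<lambda>S. {f \<in> topspace ?PX. finset_of n f \<in> S}) ` K))"
      using K by (intro openin_Union) auto
    ultimately show "\<Union>K \<subseteq> finset_of n ` topspace ?PX \<and> openin ?PX {f \<in> topspace ?PX. finset_of n f \<in> \<Union>K}"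
      using K by auto
  qed
  then show ?thesis unfolding finset_space_def by simp
qed

lemma fs_topspace:
  "topspace (finset_space X n) = finset_of n ` topspace (product_topology (\<lambda>i. X) {..<n})"
proof -
  let ?PX = "product_topology (\<lambda>i. X) {..<n}"
  have "{f \<in> topspace ?PX. finset_of n f \<in> finset_of n ` topspace ?PX} = topspace ?PX" by auto
  then have "openin (finset_space X n) (finset_of n ` topspace ?PX)"
    unfolding fs_open_iff by (metis openin_topspace subset_refl)
  then have "finset_of n ` topspace ?PX \<subseteq> topspace (finset_space X n)" by (rule openin_subset)
  moreover have "topspace (finset_space X n) \<subseteq> finset_of n ` topspace ?PX"
    using fs_open_iff by (metis openin_topspace)
  ultimately show ?thesis by blast
qed

lemma fs_closedin:
  assumes "C \<subseteq> finset_of n ` topspace (product_topology (\<lambda>i. X) {..<n})"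
    and "closedin (product_topology (\<lambda>i. X) {..<n})
        {f \<in> topspace (product_topology (\<lambda>i. X) {..<n}). finset_of n f \<in> C}"
  shows "closedin (finset_space X n) C"
proof -
  let ?PX = "product_topology (\<lambda>i. X) {..<n}"
  have "{f \<in> topspace ?PX. finset_of n f \<in> finset_of n ` topspace ?PX - C} =
     topspace ?PX - {f \<in> topspace ?PX. finset_of n f \<in> C}" by auto
  then have "openin (finset_space X n) (finset_of n ` topspace ?PX - C)"
    unfolding fs_open_iff using assms(2) by (auto simp: closedin_def)
  then show ?thesis using assms(1) by (simp add: closedin_def fs_topspace)
qed

lemma aux_r1: "f \<in> (\<Inter> ((\<lambda>i. {f \<in> A. f i \<in> K}) ` {..<(n::nat)})) \<longleftrightarrow> (\<forall>i<n. f \<in> A \<and> f i \<in> K)"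
  by auto
lemma aux_r2: "f \<in> (\<Inter> ((\<lambda>q. \<Union> ((\<lambda>i. {f \<in> A. f i \<in> {q}}) ` {..<(n::nat)})) ` Q)) \<longleftrightarrow>
      (\<forall>q\<in>Q. \<exists>i<n. f \<in> A \<and> f i = q)"
  by auto

lemma prod_closed_set:
  assumes "closedin X K" "finite Q" "Q \<noteq> {}" "Q \<subseteq> topspace X" "Hausdorff_space X" "0 < n"
  shows "closedin (product_topology (\<lambda>i. X) {..<n})
     {f \<in> topspace (product_topology (\<lambda>i. X) {..<n}). finset_of n f \<subseteq> K \<and> Q \<subseteq> finset_of n f}"
proof -
  let ?PX = "product_topology (\<lambda>i. X) {..<n}"
  have eq: "{f \<in> topspace ?PX. finset_of n f \<subseteq> K \<and> Q \<subseteq> finset_of n f} =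
     (\<Inter> ((\<lambda>i. {f \<in> topspace ?PX. f i \<in> K}) ` {..<n})) \<inter>
     (\<Inter> ((\<lambda>q. \<Union> ((\<lambda>i. {f \<in> topspace ?PX. f i \<in> {q}}) ` {..<n})) ` Q))"
  proof (rule set_eqI)
    fix f
    have l1: "finset_of n f \<subseteq> K \<longleftrightarrow> (\<forall>i<n. f i \<in> K)"
      unfolding finset_of_def image_subset_iff lessThan_iff by blast
    have l2: "Q \<subseteq> finset_of n f \<longleftrightarrow> (\<forall>q\<in>Q. \<exists>i<n. f i = q)"
      unfolding finset_of_def by auto
    have l: "f \<in> {f \<in> topspace ?PX. finset_of n f \<subseteq> K \<and> Q \<subseteq> finset_of n f} \<longleftrightarrow>
       f \<in> topspace ?PX \<and> (\<forall>i<n. f i \<in> K) \<and> (\<forall>q\<in>Q. \<exists>i<n. f i = q)"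
      using l1 l2 by (simp only: mem_Collect_eq)
    have r1: "f \<in> (\<Inter> ((\<lambda>i. {f \<in> topspace ?PX. f i \<in> K}) ` {..<n})) \<longleftrightarrow> (\<forall>i<n. f \<in> topspace ?PX \<and> f i \<in> K)"
      by (rule aux_r1)
    have r1': "(\<forall>i<n. f \<in> topspace ?PX \<and> f i \<in> K) \<longleftrightarrow> f \<in> topspace ?PX \<and> (\<forall>i<n. f i \<in> K)"
      using assms(6) by blast
    have r2: "f \<in> (\<Inter> ((\<lambda>q. \<Union> ((\<lambda>i. {f \<in> topspace ?PX. f i \<in> {q}}) ` {..<n})) ` Q)) \<longleftrightarrow>
      (\<forall>q\<in>Q. \<exists>i<n. f \<in> topspace ?PX \<and> f i = q)"
      by (rule aux_r2)
    have r: "f \<in> (\<Inter> ((\<lambda>i. {f \<in> topspace ?PX. f i \<in> K}) ` {..<n})) \<inter>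
     (\<Inter> ((\<lambda>q. \<Union> ((\<lambda>i. {f \<in> topspace ?PX. f i \<in> {q}}) ` {..<n})) ` Q)) \<longleftrightarrow>
       f \<in> topspace ?PX \<and> (\<forall>i<n. f i \<in> K) \<and> (\<forall>q\<in>Q. \<exists>i<n. f i = q)"
      unfolding Int_iff r1 r1' r2 by blast
    show "f \<in> {f \<in> topspace ?PX. finset_of n f \<subseteq> K \<and> Q \<subseteq> finset_of n f} \<longleftrightarrow>
       f \<in> (\<Inter> ((\<lambda>i. {f \<in> topspace ?PX. f i \<in> K}) ` {..<n})) \<inter>
     (\<Inter> ((\<lambda>q. \<Union> ((\<lambda>i. {f \<in> topspace ?PX. f i \<in> {q}}) ` {..<n})) ` Q))"
      unfolding l r ..
  qed
  have c1: "closedin ?PX (\<Inter> ((\<lambda>i. {f \<in> topspace ?PX. f i \<in> K}) ` {..<n}))"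
  proof (rule closedin_Inter)
    show "(\<lambda>i. {f \<in> topspace ?PX. f i \<in> K}) ` {..<n} \<noteq> {}" using assms(6) by auto
  next
    fix S assume "S \<in> (\<lambda>i. {f \<in> topspace ?PX. f i \<in> K}) ` {..<n}"
    then obtain i where i: "i < n" "S = {f \<in> topspace ?PX. f i \<in> K}" by blast
    show "closedin ?PX S" unfolding i(2)
    proof -
      have "continuous_map ?PX X (\<lambda>f. f i)"
        using continuous_map_product_projection[of i "{..<n}" "\<lambda>i. X"] i(1) by simp
      then show "closedin ?PX {f \<in> topspace ?PX. f i \<in> K}"
        by (rule closedin_continuous_map_preimage) (rule assms(1))
    qed
  qed
  have c2: "closedin ?PX (\<Inter> ((\<lambda>q. \<Union> ((\<lambda>i. {f \<in> topspace ?PX. f i \<in> {q}}) ` {..<n})) ` Q))"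
  proof (rule closedin_Inter)
    show "(\<lambda>q. \<Union> ((\<lambda>i. {f \<in> topspace ?PX. f i \<in> {q}}) ` {..<n})) ` Q \<noteq> {}" using assms(3) by auto
  next
    fix S assume "S \<in> (\<lambda>q. \<Union> ((\<lambda>i. {f \<in> topspace ?PX. f i \<in> {q}}) ` {..<n})) ` Q"
    then obtain q where q: "q \<in> Q" "S = \<Union> ((\<lambda>i. {f \<in> topspace ?PX. f i \<in> {q}}) ` {..<n})" by blast
    have qX: "q \<in> topspace X" using q(1) assms(4) by (rule subsetD[rotated])
    have cq: "closedin X {q}" by (rule closedin_Hausdorff_singleton[OF assms(5) qX])
    show "closedin ?PX S" unfolding q(2)
    proof (rule closedin_Union)
      fix T assume "T \<in> (\<lambda>i. {f \<in> topspace ?PX. f i \<in> {q}}) ` {..<n}"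
      then obtain i where i: "i < n" "T = {f \<in> topspace ?PX. f i \<in> {q}}" by blast
      show "closedin ?PX T" unfolding i(2)
      proof -
        have "continuous_map ?PX X (\<lambda>f. f i)"
          using continuous_map_product_projection[of i "{..<n}" "\<lambda>i. X"] i(1) by simp
        then show "closedin ?PX {f \<in> topspace ?PX. f i \<in> {q}}"
          by (rule closedin_continuous_map_preimage) (rule cq)
      qed
    qed auto
  qed
  show ?thesis unfolding eq using c1 c2 by (rule closedin_Int)
qed


theorem mainTheorem3:
  fixes X :: "'a topology" and D :: "'b set" and S :: "'a set" and n d :: nat
  assumes "compact_space X" and "Hausdorff_space X"
    and "uncountable D"
    and "S \<subseteq> topspace X"
    and "subtopology X S homeomorphic_space alexandroff (discrete_topology D)"
    and "0 < n" and "2 \<le> d" and "d \<le> n"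
  shows "\<not> normal_space (stratum X n d)"
proof
  assume nor: "normal_space (stratum X n d)"
  let ?AL = "alexandroff (discrete_topology D)"
  let ?PX = "product_topology (\<lambda>i. X) {..<n}"
  from assms(5) obtain f g where hm: "homeomorphic_maps (subtopology X S) ?AL f g"
    unfolding homeomorphic_space_def by blast
  have cg: "continuous_map ?AL X g"
    using hm unfolding homeomorphic_maps_def using continuous_map_in_subtopology by blast
  have fg: "\<And>y. y \<in> topspace ?AL \<Longrightarrow> f (g y) = y" using hm unfolding homeomorphic_maps_def by blast
  have ging: "inj_on g (topspace ?AL)" by (metis fg inj_onI)
  define inf where "inf = g None"
  define e where "e = (\<lambda>b. g (Some b))"
  have gX: "\<And>a. a \<in> topspace ?AL \<Longrightarrow> g a \<in> topspace X"
    using continuous_map_image_subset_topspace[OF cg] by blast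
  have infX: "inf \<in> topspace X" unfolding inf_def by (rule gX) (simp add: alex_topspace)
  have eX: "\<And>b. b \<in> D \<Longrightarrow> e b \<in> topspace X" unfolding e_def by (rule gX) (simp add: alex_topspace)
  have einj: "\<And>a b. a \<in> D \<Longrightarrow> b \<in> D \<Longrightarrow> e a = e b \<Longrightarrow> a = b"
    using ging unfolding e_def inj_on_def by (auto simp: alex_topspace)
  have einf: "\<And>b. b \<in> D \<Longrightarrow> e b \<noteq> inf"
    using ging unfolding e_def inf_def inj_on_def by (auto simp: alex_topspace)
  have L: "\<And>G. openin X G \<Longrightarrow> inf \<in> G \<Longrightarrow> finite {b\<in>D. e b \<notin> G}"
  proof -
    fix G assume G: "openin X G" "inf \<in> G"
    have "openin ?AL {a \<in> topspace ?AL. g a \<in> G}" by (rule openin_continuous_map_preimage[OF cg G(1)])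
    then have o: "{a \<in> topspace ?AL. g a \<in> G} \<subseteq> insert None (Some ` D) \<and>
       (None \<in> {a \<in> topspace ?AL. g a \<in> G} \<longrightarrow> finite {b\<in>D. Some b \<notin> {a \<in> topspace ?AL. g a \<in> G}})"
      by (rule iffD1[OF alex_open_iff])
    have "None \<in> {a \<in> topspace ?AL. g a \<in> G}" using G(2) by (auto simp: inf_def alex_topspace)
    with o have "finite {b\<in>D. Some b \<notin> {a \<in> topspace ?AL. g a \<in> G}}" by blast
    moreover have "{b\<in>D. Some b \<notin> {a \<in> topspace ?AL. g a \<in> G}} = {b\<in>D. e b \<notin> G}"
      by (auto simp: alex_topspace e_def)
    ultimately show "finite {b\<in>D. e b \<notin> G}" by simp
  qed
  define m where "m = d - 2"
  have dm: "d = m + 2" using assms(7) unfolding m_def by simp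
  have infD: "infinite D" using assms(3) countable_finite by auto
  obtain P0 where P0: "finite P0" "card P0 = m" "P0 \<subseteq> D" using infinite_arbitrarily_large[OF infD] by blast
  obtain p where p: "bij_betw p {0..<m} P0" using ex_bij_betw_nat_finite[OF P0(1)] P0(2) by blast
  have P0eq: "p ` {..<m} = P0" using p by (simp add: bij_betw_def atLeast0LessThan)
  have uD': "uncountable (D - P0)" by (rule uncountable_minus_countable[OF assms(3) countable_finite[OF P0(1)]])
  have "infinite (D - P0)" using uD' countable_finite by blast
  then obtain D1 where D1: "D1 \<subseteq> D - P0" "countable D1" "infinite D1"
    using infinite_countable_subset' by blast
  define D2 where "D2 = D - P0 - D1"
  have uD2: "uncountable D2" unfolding D2_def using uncountable_minus_countable[OF uD' D1(2)] .
  define F where "F = (\<lambda>a t. restrict (\<lambda>i. if i < m then e (p i) else if i = m then t else e a) {..<n})"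
  have Fcont: "\<And>a. a \<in> D \<Longrightarrow> continuous_map X ?PX (F a)"
  proof -
    fix a assume a: "a \<in> D"
    show "continuous_map X ?PX (F a)"
      unfolding continuous_map_componentwise
    proof (intro conjI ballI)
      show "F a ` topspace X \<subseteq> extensional {..<n}" by (auto simp: F_def)
    next
      fix k assume k: "k \<in> {..<n}"
      show "continuous_map X X (\<lambda>x. F a x k)"
      proof (cases "k < m")
        case True then have "p k \<in> D" using p P0(3) by (auto simp: bij_betw_def)
        then show ?thesis using True k eX by (simp add: F_def)
      next
        case False then show ?thesis using k eX a
          by (cases "k = m") (auto simp: F_def continuous_map_id[unfolded id_def])
      qed
    qed
  qed
  have mn: "m + 1 < n" using assms(7,8) unfolding m_def by arith
  have Fimg: "\<And>a t. finset_of n (F a t) = insert t (insert (e a) (e ` P0))"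
  proof -
    fix a t
    show "finset_of n (F a t) = insert t (insert (e a) (e ` P0))"
    proof
      show "finset_of n (F a t) \<subseteq> insert t (insert (e a) (e ` P0))"
        using P0eq by (auto simp: finset_of_def F_def)
      show "insert t (insert (e a) (e ` P0)) \<subseteq> finset_of n (F a t)"
      proof -
        have "t = F a t m" "m < n" using mn by (auto simp: F_def)
        moreover have "e a = F a t (m+1)" "m+1<n" using mn by (auto simp: F_def)
        moreover have "e ` P0 \<subseteq> F a t ` {..<n}"
        proof
          fix y assume "y \<in> e ` P0"
          then obtain j where j: "j < m" "y = e (p j)" using P0eq by auto
          then have "y = F a t j" "j < n" using mn by (auto simp: F_def)
          then show "y \<in> F a t ` {..<n}" by auto
        qed
        ultimately show ?thesis unfolding finset_of_def by blast
      qed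
    qed
  qed
  have injP: "inj_on e P0" unfolding inj_on_def using einj P0(3) by blast
  have cardP: "card (e ` P0) = m" using card_image[OF injP] P0(2) by simp
  have finP: "finite (e ` P0)" using P0(1) by simp
  have card4: "\<And>a b. a \<in> D - P0 \<Longrightarrow> b \<in> D - P0 \<Longrightarrow> a \<noteq> b \<Longrightarrow>
      card (insert (e b) (insert (e a) (e ` P0))) = d"
  proof -
    fix a b assume a: "a \<in> D - P0" and b: "b \<in> D - P0" and ab: "a \<noteq> b"
    have "e a \<notin> e ` P0" using a einj P0(3) by blast
    moreover have "e b \<notin> insert (e a) (e ` P0)" using a b ab einj P0(3) by blast
    ultimately show "card (insert (e b) (insert (e a) (e ` P0))) = d"
      using finP cardP dm by simp
  qed
  have card3: "\<And>a. a \<in> D - P0 \<Longrightarrow> card (insert inf (insert (e a) (e ` P0))) = d"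
  proof -
    fix a assume a: "a \<in> D - P0"
    have "e a \<notin> e ` P0" using a einj P0(3) by blast
    moreover have "inf \<notin> insert (e a) (e ` P0)" using a einf P0(3) by blast
    ultimately show "card (insert inf (insert (e a) (e ` P0))) = d"
      using finP cardP dm by simp
  qed
  define T where "T = {z. z \<subseteq> topspace X \<and> finite z \<and> card z = d}"
  have strat: "stratum X n d = subtopology (finset_space X n) T" by (simp add: stratum_def T_def)
  define Q where "Q = insert inf (e ` P0)"
  have Qfin: "finite Q" "Q \<noteq> {}" "Q \<subseteq> topspace X" using finP infX eX P0(3) by (auto simp: Q_def)
  have cardQ: "card Q \<le> m + 1" unfolding Q_def using card_insert_le_m1 finP cardP
    by (metis Suc_eq_plus1 card_insert_if le_refl lessI less_imp_le)
  have Kclosed: "\<And>E. E \<subseteq> D \<Longrightarrow> closedin X (insert inf (e ` E))"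
  proof -
    fix E assume E: "E \<subseteq> D"
    have "closedin ?AL (insert None (Some ` E))"
      unfolding closedin_def
    proof
      show "insert None (Some ` E) \<subseteq> topspace ?AL" using E by (auto simp: alex_topspace)
      have "topspace ?AL - insert None (Some ` E) = Some ` (D - E)" by (auto simp: alex_topspace)
      moreover have "openin ?AL (Some ` (D - E))" by (auto simp: alex_open_iff)
      ultimately show "openin ?AL (topspace ?AL - insert None (Some ` E))" by simp
    qed
    then have "compactin ?AL (insert None (Some ` E))" by (rule closedin_compact_space[OF alex_compact])
    then have "compactin X (g ` insert None (Some ` E))" by (rule image_compactin[OF _ cg])
    moreover have "g ` insert None (Some ` E) = insert inf (e ` E)" by (auto simp: inf_def e_def image_image)
    ultimately show "closedin X (insert inf (e ` E))" using compactin_imp_closedin[OF assms(2)] by metis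
  qed
  have Cclosed: "\<And>E. E \<subseteq> D \<Longrightarrow> closedin (finset_space X n)
      {z \<in> finset_of n ` topspace ?PX. z \<subseteq> insert inf (e ` (P0 \<union> E)) \<and> Q \<subseteq> z}"
  proof -
    fix E assume E: "E \<subseteq> D"
    have eq: "{f \<in> topspace ?PX. finset_of n f \<in> {z \<in> finset_of n ` topspace ?PX. z \<subseteq> insert inf (e ` (P0 \<union> E)) \<and> Q \<subseteq> z}}
       = {f \<in> topspace ?PX. finset_of n f \<subseteq> insert inf (e ` (P0 \<union> E)) \<and> Q \<subseteq> finset_of n f}" by auto
    have "closedin ?PX {f \<in> topspace ?PX. finset_of n f \<subseteq> insert inf (e ` (P0 \<union> E)) \<and> Q \<subseteq> finset_of n f}"
      by (rule prod_closed_set) (use Kclosed[of "P0 \<union> E"] E P0(3) Qfin assms(2,6) in auto)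
    then show "closedin (finset_space X n)
      {z \<in> finset_of n ` topspace ?PX. z \<subseteq> insert inf (e ` (P0 \<union> E)) \<and> Q \<subseteq> z}"
      by (intro fs_closedin) (auto simp only: eq)
  qed
  define C1 where "C1 = {z \<in> finset_of n ` topspace ?PX. z \<subseteq> insert inf (e ` (P0 \<union> D1)) \<and> Q \<subseteq> z}"
  define C2 where "C2 = {z \<in> finset_of n ` topspace ?PX. z \<subseteq> insert inf (e ` (P0 \<union> D2)) \<and> Q \<subseteq> z}"
  have D2D: "D2 \<subseteq> D - P0" "D1 \<inter> D2 = {}" by (auto simp: D2_def)
  have cl1: "closedin (stratum X n d) (C1 \<inter> T)"
    unfolding strat closedin_subtopology C1_def using Cclosed[of D1] D1(1) by blast
  have cl2: "closedin (stratum X n d) (C2 \<inter> T)"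
    unfolding strat closedin_subtopology C2_def using Cclosed[of D2] D2D(1) by blast
  have disj: "disjnt (C1 \<inter> T) (C2 \<inter> T)"
    unfolding disjnt_def
  proof (rule ccontr)
    assume "C1 \<inter> T \<inter> (C2 \<inter> T) \<noteq> {}"
    then obtain z where z: "z \<in> C1" "z \<in> C2" "z \<in> T" by blast
    have "z \<subseteq> Q"
    proof
      fix x assume x: "x \<in> z"
      show "x \<in> Q"
      proof (cases "x = inf")
        case True then show ?thesis by (simp add: Q_def)
      next
        case False
        then obtain b1 b2 where b: "b1 \<in> P0 \<union> D1" "b2 \<in> P0 \<union> D2" "x = e b1" "x = e b2"
          using z x unfolding C1_def C2_def by blast
        have "b1 \<in> D" "b2 \<in> D" using b(1,2) D1(1) D2D(1) P0(3) by auto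
        then have "b1 = b2" using einj b(3,4) by metis
        then have "b1 \<in> P0" using b D2D(2) by blast
        then show ?thesis using b by (simp add: Q_def)
      qed
    qed
    then have "card z \<le> card Q" by (rule card_mono[OF Qfin(1)])
    then have "card z \<le> m + 1" using cardQ by linarith
    moreover have "card z = d" using z(3) by (simp add: T_def)
    ultimately show False using dm by simp
  qed
  obtain U V where UV: "openin (stratum X n d) U" "openin (stratum X n d) V"
      "C1 \<inter> T \<subseteq> U" "C2 \<inter> T \<subseteq> V" "disjnt U V"
    using nor[unfolded normal_space_def, rule_format, OF conjI[OF cl1 conjI[OF cl2 disj]]] by blast
  obtain W1 where W1: "openin (finset_space X n) W1" "U = W1 \<inter> T"
    using UV(1) unfolding strat openin_subtopology by blast
  obtain W2 where W2: "openin (finset_space X n) W2" "V = W2 \<inter> T"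
    using UV(2) unfolding strat openin_subtopology by blast
  have L2: "\<And>W a. openin (finset_space X n) W \<Longrightarrow> a \<in> D \<Longrightarrow> finset_of n (F a inf) \<in> W \<Longrightarrow>
      finite {b\<in>D. finset_of n (F a (e b)) \<notin> W}"
  proof -
    fix W a assume W: "openin (finset_space X n) W" and a: "a \<in> D" and inW: "finset_of n (F a inf) \<in> W"
    have op: "openin ?PX {f \<in> topspace ?PX. finset_of n f \<in> W}" using W fs_open_iff by blast
    define G where "G = {t \<in> topspace X. F a t \<in> {f \<in> topspace ?PX. finset_of n f \<in> W}}"
    have "openin X G" unfolding G_def by (rule openin_continuous_map_preimage[OF Fcont[OF a] op])
    moreover have "inf \<in> G" unfolding G_def
      using infX inW continuous_map_image_subset_topspace[OF Fcont[OF a]] by auto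
    ultimately have "finite {b\<in>D. e b \<notin> G}" by (rule L)
    moreover have "{b\<in>D. finset_of n (F a (e b)) \<notin> W} \<subseteq> {b\<in>D. e b \<notin> G}"
      unfolding G_def using eX continuous_map_image_subset_topspace[OF Fcont[OF a]] by auto
    ultimately show "finite {b\<in>D. finset_of n (F a (e b)) \<notin> W}" using finite_subset by blast
  qed
  have inC: "\<And>x E. E \<subseteq> D - P0 \<Longrightarrow> x \<in> E \<Longrightarrow>
      finset_of n (F x inf) \<in> {z \<in> finset_of n ` topspace ?PX. z \<subseteq> insert inf (e ` (P0 \<union> E)) \<and> Q \<subseteq> z} \<inter> T"
  proof -
    fix x E assume E: "E \<subseteq> D - P0" and x: "x \<in> E"
    then have xD: "x \<in> D - P0" by auto
    have "F x inf \<in> topspace ?PX" using Fcont xD infX continuous_map_image_subset_topspace by blast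
    moreover have "card (insert inf (insert (e x) (e ` P0))) = d" using card3[OF xD] .
    moreover have "insert inf (insert (e x) (e ` P0)) \<subseteq> topspace X" using infX eX xD P0(3) by auto
    moreover have "insert inf (insert (e x) (e ` P0)) \<subseteq> insert inf (e ` (P0 \<union> E))" using x by auto
    moreover have "finite (insert inf (insert (e x) (e ` P0)))" using finP by simp
    moreover have "insert inf (e ` P0) \<subseteq> insert inf (insert (e x) (e ` P0))" by auto
    ultimately show "finset_of n (F x inf) \<in> {z \<in> finset_of n ` topspace ?PX. z \<subseteq> insert inf (e ` (P0 \<union> E)) \<and> Q \<subseteq> z} \<inter> T"
      unfolding T_def Q_def Fimg[symmetric] by (simp add: image_eqI)
  qed
  have fin1: "\<And>x. x \<in> D1 \<Longrightarrow> finite {b\<in>D. finset_of n (F x (e b)) \<notin> W1}"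
  proof -
    fix x assume x: "x \<in> D1"
    have "finset_of n (F x inf) \<in> W1" using inC[OF D1(1) x] UV(3) W1(2) unfolding C1_def by blast
    then show "finite {b\<in>D. finset_of n (F x (e b)) \<notin> W1}" using L2 W1(1) x D1(1) by blast
  qed
  have fin2: "\<And>x. x \<in> D2 \<Longrightarrow> finite {b\<in>D. finset_of n (F x (e b)) \<notin> W2}"
  proof -
    fix x assume x: "x \<in> D2"
    have "finset_of n (F x inf) \<in> W2" using inC[OF D2D(1) x] UV(4) W2(2) unfolding C2_def by blast
    then show "finite {b\<in>D. finset_of n (F x (e b)) \<notin> W2}" using L2 W2(1) x D2D(1) by blast
  qed
  have "countable (\<Union>x\<in>D1. {b\<in>D. finset_of n (F x (e b)) \<notin> W1})"
    using D1(2) fin1 by (intro countable_UN) (auto intro: countable_finite)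
  then have "uncountable (D2 - (\<Union>x\<in>D1. {b\<in>D. finset_of n (F x (e b)) \<notin> W1}))"
    by (rule uncountable_minus_countable[OF uD2])
  then have "D2 - (\<Union>x\<in>D1. {b\<in>D. finset_of n (F x (e b)) \<notin> W1}) \<noteq> {}"
    by (metis countable_empty)
  then obtain y where y: "y \<in> D2" "y \<notin> (\<Union>x\<in>D1. {b\<in>D. finset_of n (F x (e b)) \<notin> W1})"
    by blast
  have "infinite (D1 - {b\<in>D. finset_of n (F y (e b)) \<notin> W2})"
    by (rule Diff_infinite_finite[OF fin2[OF y(1)] D1(3)])
  then have "D1 - {b\<in>D. finset_of n (F y (e b)) \<notin> W2} \<noteq> {}"
    by (rule infinite_imp_nonempty)
  then obtain x where x: "x \<in> D1" "x \<notin> {b\<in>D. finset_of n (F y (e b)) \<notin> W2}"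
    by blast
  have xD: "x \<in> D - P0" using x D1(1) by blast
  have yD: "y \<in> D - P0" using y D2D(1) by blast
  have xy: "x \<noteq> y" using x(1) y(1) D2D(2) by blast
  have xD': "x \<in> D" using xD by simp
  have yD': "y \<in> D" using yD by simp
  have "y \<notin> {b\<in>D. finset_of n (F x (e b)) \<notin> W1}" using y(2) x(1) by blast
  then have i1: "finset_of n (F x (e y)) \<in> W1" using yD' by simp
  have i2: "finset_of n (F y (e x)) \<in> W2" using x(2) xD' by simp
  define z where "z = insert (e y) (insert (e x) (e ` P0))"
  have z1: "finset_of n (F x (e y)) = z" unfolding z_def by (rule Fimg)
  have z2: "finset_of n (F y (e x)) = z" unfolding z_def by (subst Fimg) (rule insert_commute)
  have zsub: "z \<subseteq> topspace X" unfolding z_def using eX xD' yD' P0(3) by blast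
  have zfin: "finite z" unfolding z_def using finP by simp
  have zcard: "card z = d" unfolding z_def by (rule card4[OF xD yD xy])
  have zT: "z \<in> T" unfolding T_def using zsub zfin zcard by blast
  have "z \<in> W1" using i1 z1 by simp
  then have zU: "z \<in> U" using zT unfolding W1(2) by (rule IntI)
  have "z \<in> W2" using i2 z2 by simp
  then have zV: "z \<in> V" using zT unfolding W2(2) by (rule IntI)
  from UV(5) zU zV show False by (simp add: disjnt_iff)
qed

end
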